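(* Let $S_\alpha(Y)=\#\{n\leqslant Y:\ p\mid n\Rightarrow p^\alpha\mid n\}$ (the number of natural numbers $n\leqslant Y$ such that every prime dividing $n$ divides it to exponent at least $\alpha$). Then uniformly for integers $\alpha\geqslant2$ and real $Y\geqslant 2$, $$S_\alpha(Y)\ll\alpha\kappa^\alpha Y^{1/\alpha}\log Y,$$ with an absolute implied constant, where $\kappa=\exp\left(\sum_p\frac{1}{p\log p}\right)$.
   Context: The sum defining $\kappa$ is over all primes. *)

theory Defs
  imports "HOL-Analysis.Analysis" "HOL-Computational_Algebra.Primes"
begin

definition S_full :: "nat \<Rightarrow> real \<Rightarrow> nat" where
  "S_full \<alpha> Y = card {n::nat. 1 \<le> n \<and> real n \<le> Y \<and>
      (\<forall>p. prime p \<and> p dvd n \<longrightarrow> p ^ \<alpha> dvd n)}"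

definition kappa :: real where
  "kappa = exp (\<Sum>\<^sub>\<infinity>p\<in>{p::nat. prime p}. 1 / (real p * ln (real p)))"

end

theory Submission
  imports Defs
begin


lemma primes_block_dvd_binom:
  fixes n :: nat
  assumes "n \<ge> 1"
  shows "\<Prod>{p. prime p \<and> n < p \<and> p \<le> 2*n} dvd (2*n choose n)"
proof -
  define Q where "Q = {p. prime p \<and> n < p \<and> p \<le> 2*n}"
  define b where "b = (2*n choose n)"
  have b0: "b > 0" unfolding b_def by simp
  have fQ: "finite Q" unfolding Q_def by (rule finite_subset[of _ "{..2*n}"]) auto
  have "p dvd b" if "p \<in> Q" for p
  proof -
    have pp: "prime p" and pn: "n < p" "p \<le> 2*n" using that unfolding Q_def by auto
    have "fact n * fact (2*n - n) * b = fact (2*n)" unfolding b_def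
      by (rule binomial_fact_lemma) simp
    moreover have "p dvd fact (2*n)" using pp pn prime_dvd_fact_iff by blast
    ultimately have "p dvd fact n * fact n * b" by simp
    moreover have "\<not> p dvd fact n" using pp pn prime_dvd_fact_iff by auto
    ultimately show ?thesis using pp by (simp add: prime_dvd_mult_iff)
  qed
  hence sub: "Q \<subseteq> prime_factors b" using b0 unfolding Q_def by (auto simp: prime_factors_dvd)
  have "\<Prod>Q dvd \<Prod>(prime_factors b)" by (rule prod_dvd_prod_subset[OF _ sub]) simp
  also have "\<Prod>(prime_factors b) dvd (\<Prod>p\<in>prime_factors b. p ^ multiplicity p b)"
    by (rule prod_dvd_prod) (metis dvd_power in_prime_factors_imp_prime prime_factors_multiplicity
         mem_Collect_eq neq0_conv)
  also have "\<dots> = b" using prime_factorization_nat[OF b0] by simp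
  finally show ?thesis unfolding Q_def b_def .
qed

lemma primes_block_card:
  fixes n :: nat
  assumes "n \<ge> 1"
  shows "real (card {p. prime p \<and> n < p \<and> p \<le> 2*n}) * ln (real n) \<le> 2 * real n * ln 2"
proof -
  define Q where "Q = {p. prime p \<and> n < p \<and> p \<le> 2*n}"
  have fQ: "finite Q" unfolding Q_def by (rule finite_subset[of _ "{..2*n}"]) auto
  have "\<Prod>Q \<le> (2*n choose n)"
    using primes_block_dvd_binom[OF assms] unfolding Q_def[symmetric]
    by (intro dvd_imp_le) auto
  also have "\<dots> \<le> 2 ^ (2*n)" by (rule binomial_le_pow2)
  finally have P: "\<Prod>Q \<le> 2 ^ (2*n)" .
  have "n ^ card Q = (\<Prod>p\<in>Q. n)" by simp
  also have "\<dots> \<le> \<Prod>Q" by (rule prod_mono) (auto simp: Q_def)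
  finally have "n ^ card Q \<le> (2::nat) ^ (2*n)" using P by linarith
  hence "real n ^ card Q \<le> 2 ^ (2*n)" by (metis of_nat_le_iff of_nat_numeral of_nat_power)
  hence "ln (real n ^ card Q) \<le> ln (2 ^ (2*n))" using assms by (subst ln_le_cancel_iff) auto
  hence "real (card Q) * ln (real n) \<le> real (2*n) * ln 2" using assms by (simp add: ln_realpow)
  thus ?thesis unfolding Q_def by simp
qed


lemma prime_pln_nonneg: "prime (p::nat) \<Longrightarrow> 0 \<le> real p * ln (real p)"
  using prime_ge_2_nat[of p] by simp

lemma block_sum:
  fixes K :: nat
  assumes K: "K \<ge> 1"
  shows "(\<Sum>p\<in>{p. prime p \<and> 2^K < p \<and> p \<le> 2*2^K}. 1 / (real p * ln (real p)))
           \<le> 4 / ln 2 * (1 / real K - 1 / real (K+1))"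
proof -
  define n :: nat where "n = 2^K"
  define Q where "Q = {p. prime p \<and> n < p \<and> p \<le> 2*n}"
  have n1: "n \<ge> 1" unfolding n_def by simp
  have fQ: "finite Q" unfolding Q_def by (rule finite_subset[of _ "{..2*n}"]) auto
  have lnn: "ln (real n) = real K * ln 2" unfolding n_def by (simp add: ln_realpow)
  have c: "real (card Q) * (real K * ln 2) \<le> 2 * real n * ln 2"
    using primes_block_card[OF n1] unfolding Q_def lnn .
  hence c': "real (card Q) * real K \<le> 2 * real n" by simp
  have fb: "1 / (real p * ln (real p)) \<le> 1 / (real n * (real K * ln 2))" if "p \<in> Q" for p
  proof -
    have "n < p" using that Q_def by auto
    hence "real n \<le> real p" by simp
    moreover have "ln (real n) \<le> ln (real p)" using \<open>n < p\<close> n1 by simp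
    hence "real K * ln 2 \<le> ln (real p)" using lnn by simp
    moreover have "0 < real n * (real K * ln 2)" using n1 K by simp
    moreover have "0 < real p * ln (real p)" using \<open>n < p\<close> n1 by simp
    ultimately show ?thesis
      by (intro divide_left_mono mult_mono) (auto intro: mult_pos_pos)
  qed
  have "(\<Sum>p\<in>Q. 1 / (real p * ln (real p))) \<le> (\<Sum>p\<in>Q. 1 / (real n * (real K * ln 2)))"
    by (rule sum_mono) (rule fb)
  also have "\<dots> = real (card Q) / (real n * (real K * ln 2))" by simp
  also have "\<dots> \<le> 2 / (real K * real K * ln 2)"
  proof -
    have "real (card Q) / (real n * (real K * ln 2)) = (real (card Q) * real K) / (real n * (real K * real K * ln 2))"
      using K by (simp add: field_simps)
    also have "\<dots> \<le> (2 * real n) / (real n * (real K * real K * ln 2))"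
      using c' K n1 by (intro divide_right_mono) auto
    also have "\<dots> = 2 / (real K * real K * ln 2)" using n1 by (simp add: field_simps)
    finally show ?thesis .
  qed
  also have "\<dots> \<le> 4 / ln 2 * (1 / real K - 1 / real (K+1))"
  proof -
    have "1 / real K - 1 / real (K+1) = 1 / (real K * real (K+1))" using K by (simp add: field_simps)
    moreover have "2 / (real K * real K) \<le> 4 / (real K * real (K+1))"
    proof -
      have "2 / (real K * real K) = 4 / (real K * (2 * real K))" using K by simp
      also have "\<dots> \<le> 4 / (real K * real (K+1))"
        using K by (intro divide_left_mono mult_left_mono) auto
      finally show ?thesis .
    qed
    ultimately have "2 / (real K * real K) / ln 2 \<le> 4 / (real K * real (K+1)) / ln 2"
      by (intro divide_right_mono) auto
    also have "\<dots> = 4 / ln 2 * (1 / (real K * real (K+1)))" by simp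
    also have "\<dots> = 4 / ln 2 * (1 / real K - 1 / real (K+1))" using \<open>1 / real K - 1 / real (K+1) = _\<close> by simp
    finally show ?thesis by simp
  qed
  finally show ?thesis unfolding Q_def n_def .
qed

lemma primes_upto_sum:
  fixes K :: nat
  assumes K: "K \<ge> 1"
  shows "(\<Sum>p\<in>{p. prime p \<and> p \<le> 2^K}. 1 / (real p * ln (real p)))
           \<le> 1 / (2 * ln 2) + 4 / ln 2 * (1 - 1 / real K)"
  using K
proof (induction K rule: dec_induct)
  case base
  have "{p::nat. prime p \<and> p \<le> 2^1} = {2}"
    by (auto simp: prime_ge_2_nat) (metis le_antisym prime_ge_2_nat)
  then show ?case by simp
next
  case (step K)
  have eq: "{p::nat. prime p \<and> p \<le> 2^Suc K} = {p. prime p \<and> p \<le> 2^K} \<union> {p. prime p \<and> 2^K < p \<and> p \<le> 2*2^K}"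
    by auto
  have "(\<Sum>p\<in>{p::nat. prime p \<and> p \<le> 2^Suc K}. 1 / (real p * ln (real p)))
     = (\<Sum>p\<in>{p. prime p \<and> p \<le> 2^K}. 1 / (real p * ln (real p)))
       + (\<Sum>p\<in>{p. prime p \<and> 2^K < p \<and> p \<le> 2*2^K}. 1 / (real p * ln (real p)))"
    unfolding eq by (rule sum.union_disjoint) auto
  also have "\<dots> \<le> (1 / (2 * ln 2) + 4 / ln 2 * (1 - 1 / real K)) + 4 / ln 2 * (1 / real K - 1 / real (K+1))"
    using step.IH block_sum[OF step.hyps(1)] by linarith
  also have "\<dots> = 1 / (2 * ln 2) + 4 / ln 2 * ((1 - 1 / real K) + (1 / real K - 1 / real (K+1)))"
    by (simp only: distrib_left add.assoc)
  also have "\<dots> = 1 / (2 * ln 2) + 4 / ln 2 * (1 - 1 / real (Suc K))" by simp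
  finally show ?case .
qed

lemma summable_primes:
  "(\<lambda>p. 1 / (real p * ln (real p))) summable_on {p::nat. prime p}"
proof (rule nonneg_bdd_above_summable_on)
  fix p :: nat assume "p \<in> {p. prime p}"
  then have "p \<ge> 2" using prime_ge_2_nat by auto
  then show "0 \<le> 1 / (real p * ln (real p))" by simp
next
  show "bdd_above (sum (\<lambda>p. 1 / (real p * ln (real p))) ` {F. F \<subseteq> {p::nat. prime p} \<and> finite F})"
  proof (rule bdd_aboveI)
    fix s assume "s \<in> sum (\<lambda>p. 1 / (real p * ln (real p))) ` {F. F \<subseteq> {p::nat. prime p} \<and> finite F}"
    then obtain F where F: "F \<subseteq> {p. prime p}" "finite F" and s: "s = sum (\<lambda>p. 1 / (real p * ln (real p))) F"
      by auto
    define K where "K = Suc (Max (insert 0 F))"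
    have sub: "F \<subseteq> {p. prime p \<and> p \<le> 2^K}"
    proof
      fix p assume "p \<in> F"
      hence "p \<le> Max (insert 0 F)" using F by simp
      also have "\<dots> < 2 ^ Max (insert 0 F)" by (rule less_exp)
      also have "\<dots> \<le> 2^K" unfolding K_def by simp
      finally show "p \<in> {p. prime p \<and> p \<le> 2^K}" using F \<open>p \<in> F\<close> by auto
    qed
    have "s \<le> (\<Sum>p\<in>{p. prime p \<and> p \<le> 2^K}. 1 / (real p * ln (real p)))"
      unfolding s by (rule sum_mono2) (auto intro!: finite_subset[of _ "{..2^K}"] sub simp: prime_pln_nonneg)
    also have "\<dots> \<le> 1 / (2 * ln 2) + 4 / ln 2 * (1 - 1 / real K)"
      by (rule primes_upto_sum) (simp add: K_def)
    also have "\<dots> \<le> 1 / (2 * ln 2) + 4 / ln 2 * 1"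
      by (intro add_left_mono mult_left_mono) auto
    finally show "s \<le> 1 / (2 * ln 2) + 4 / ln 2 * 1" .
  qed
qed


lemma pow_powr_swap: "(0::real) < x \<Longrightarrow> (x ^ e) powr r = (x powr r) ^ e"
  by (simp add: powr_power powr_realpow[symmetric] powr_powr mult.commute)

lemma geom_partial: "(x::real) \<noteq> 1 \<Longrightarrow> (\<Sum>j\<in>{1..M}. x ^ j) = x * (1 - x ^ M) / (1 - x)"
proof (induction M)
  case 0 then show ?case by simp
next
  case (Suc M)
  have "(\<Sum>j\<in>{1..Suc M}. x ^ j) = (\<Sum>j\<in>{1..M}. x ^ j) + x ^ Suc M" by simp
  also have "\<dots> = x * (1 - x ^ M) / (1 - x) + x ^ Suc M" using Suc by simp
  also have "\<dots> = x * (1 - x ^ Suc M) / (1 - x)" using Suc.prems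
    by (simp add: field_simps)
  finally show ?case .
qed

lemma local_factor:
  fixes p :: nat and a :: nat
  assumes p: "prime p" and a: "a \<ge> 1"
  shows "(\<Sum>j\<in>{0..M}. (real p powr (-1/real a)) ^ j / (if j = 0 then 1 else real p))
           \<le> exp (real a / (real p * ln (real p)))"
proof -
  define x where "x = real p powr (-1/real a)"
  define y where "y = real p powr (1/real a)"
  have p2: "real p \<ge> 2" using prime_ge_2_nat[OF p] by simp
  have lnp: "ln (real p) > 0" using p2 by simp
  have y: "y = exp (ln (real p) / real a)" unfolding y_def powr_def using p2 by simp
  have y1: "y - 1 \<ge> ln (real p) / real a" unfolding y using exp_ge_add_one_self[of "ln (real p) / real a"] by linarith
  have ypos: "ln (real p) / real a > 0" using lnp a by simp
  have xy: "x = 1 / y" unfolding x_def y_def by (simp add: powr_minus_divide)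
  have x0: "0 < x" unfolding x_def using p2 by simp
  have "y > 1" using y1 ypos by linarith
  hence x1: "x < 1" using xy by simp
  have "(\<Sum>j\<in>{0..M}. x ^ j / (if j = 0 then 1 else real p))
        = 1 + (\<Sum>j\<in>{1..M}. x ^ j / real p)"
    by (simp add: sum.atLeast_Suc_atMost atLeastSucAtMost_greaterThanAtMost)
  also have "(\<Sum>j\<in>{1..M}. x ^ j / real p) = (\<Sum>j\<in>{1..M}. x ^ j) / real p"
    by (simp add: sum_divide_distrib)
  also have "(\<Sum>j\<in>{1..M}. x ^ j) = x * (1 - x ^ M) / (1 - x)"
    using x1 by (intro geom_partial) simp
  also have "\<dots> \<le> x / (1 - x)"
    using x0 x1 by (intro divide_right_mono) (auto simp: mult_le_cancel_left1)
  also have "x / (1 - x) = 1 / (y - 1)" unfolding xy using y1 ypos by (simp add: field_simps)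
  also have "\<dots> \<le> 1 / (ln (real p) / real a)"
    using y1 ypos by (intro divide_left_mono mult_pos_pos) auto
  also have "\<dots> = real a / ln (real p)" by simp
  finally have "(\<Sum>j\<in>{0..M}. x ^ j / (if j = 0 then 1 else real p)) \<le> 1 + real a / ln (real p) / real p"
    using p2 by (simp add: divide_right_mono)
  also have "\<dots> = 1 + real a / (real p * ln (real p))" by simp
  also have "\<dots> \<le> exp (real a / (real p * ln (real p)))" by (rule exp_ge_add_one_self)
  finally show ?thesis unfolding x_def .
qed


definition my_rad :: "nat \<Rightarrow> nat" where "my_rad c = \<Prod>(prime_factors c)"

lemma factor_repr:
  fixes c :: nat
  assumes c0: "c > 0" and fP: "finite P" and sub: "prime_factors c \<subseteq> P" and Pp: "\<And>p. p \<in> P \<Longrightarrow> prime p"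
  shows "c = (\<Prod>p\<in>P. p ^ multiplicity p c)"
proof -
  have "c = (\<Prod>p\<in>prime_factors c. p ^ multiplicity p c)" by (rule prime_factorization_nat[OF c0])
  also have "\<dots> = (\<Prod>p\<in>P. p ^ multiplicity p c)"
  proof (rule prod.mono_neutral_left[OF fP sub])
    show "\<forall>i\<in>P - prime_factors c. i ^ multiplicity i c = 1"
      using Pp c0 by (auto simp: prime_factors_multiplicity)
  qed
  finally show ?thesis .
qed

lemma rad_repr:
  fixes c :: nat
  assumes c0: "c > 0" and fP: "finite P" and sub: "prime_factors c \<subseteq> P" and Pp: "\<And>p. p \<in> P \<Longrightarrow> prime p"
  shows "real (my_rad c) = (\<Prod>p\<in>P. if multiplicity p c = 0 then 1 else real p)"
proof -
  have "real (my_rad c) = (\<Prod>p\<in>prime_factors c. real p)" unfolding my_rad_def by simp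
  also have "\<dots> = (\<Prod>p\<in>P. if multiplicity p c = 0 then 1 else real p)"
  proof (rule prod.mono_neutral_cong_left[OF fP sub])
    show "\<forall>i\<in>P - prime_factors c. (if multiplicity i c = 0 then 1 else real i) = 1"
      using Pp c0 by (auto simp: prime_factors_multiplicity)
    show "real x = (if multiplicity x c = 0 then 1 else real x)" if "x \<in> prime_factors c" for x
    proof -
      have "multiplicity x c > 0" using that prime_factors_multiplicity[of c] by blast
      then show ?thesis by simp
    qed
  qed
  finally show ?thesis .
qed

lemma euler_bound:
  fixes a M :: nat
  assumes a: "a \<ge> 1"
  shows "(\<Sum>c\<in>{1..M}. real c powr (-1/real a) / real (my_rad c)) \<le> kappa ^ a"
proof -
  define P where "P = {p::nat. prime p \<and> p \<le> M}"
  have fP: "finite P" unfolding P_def by (rule finite_subset[of _ "{..M}"]) auto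
  have Pp: "\<And>p. p \<in> P \<Longrightarrow> prime p" unfolding P_def by auto
  define \<phi> where "\<phi> = (\<lambda>(p::nat) (j::nat). (real p powr (-1/real a)) ^ j / (if j = 0 then 1 else real p))"
  define E where "E = (\<lambda>c::nat. restrict (\<lambda>p. multiplicity p c) P)"
  have subc: "prime_factors c \<subseteq> P" if "c \<in> {1..M}" for c
  proof
    fix p assume p: "p \<in> prime_factors c"
    hence "p dvd c" "prime p" by auto
    hence "p \<le> c" using that by (intro dvd_imp_le) auto
    thus "p \<in> P" using that \<open>prime p\<close> unfolding P_def by auto
  qed
  have A: "real c powr (-1/real a) / real (my_rad c) = (\<Prod>p\<in>P. \<phi> p (E c p))" if c: "c \<in> {1..M}" for c
  proof -
    have c0: "c > 0" using c by simp
    have "real c = real (\<Prod>p\<in>P. p ^ multiplicity p c)"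
      using factor_repr[OF c0 fP subc[OF c] Pp] by simp
    also have "\<dots> = (\<Prod>p\<in>P. real p ^ multiplicity p c)" by simp
    finally have "real c powr (-1/real a) = (\<Prod>p\<in>P. real p ^ multiplicity p c) powr (-1/real a)" by simp
    also have "\<dots> = (\<Prod>p\<in>P. (real p ^ multiplicity p c) powr (-1/real a))" by (rule prod_powr_distrib)
    also have "\<dots> = (\<Prod>p\<in>P. (real p powr (-1/real a)) ^ multiplicity p c)"
      by (rule prod.cong) (auto intro!: pow_powr_swap simp: Pp prime_gt_0_nat)
    finally have num: "real c powr (-1/real a) = (\<Prod>p\<in>P. (real p powr (-1/real a)) ^ multiplicity p c)" .
    have den: "real (my_rad c) = (\<Prod>p\<in>P. if multiplicity p c = 0 then 1 else real p)"
      by (rule rad_repr[OF c0 fP subc[OF c] Pp])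
    show ?thesis unfolding num den \<phi>_def E_def
      by (simp add: prod_dividef[symmetric])
  qed
  have inj: "inj_on E {1..M}"
  proof (rule inj_onI)
    fix c d assume c: "c \<in> {1..M}" and d: "d \<in> {1..M}" and e: "E c = E d"
    have "\<And>p. p \<in> P \<Longrightarrow> multiplicity p c = multiplicity p d"
      using e unfolding E_def by (metis restrict_apply')
    hence "(\<Prod>p\<in>P. p ^ multiplicity p c) = (\<Prod>p\<in>P. p ^ multiplicity p d)" by simp
    thus "c = d" using factor_repr[OF _ fP subc[OF c] Pp] factor_repr[OF _ fP subc[OF d] Pp] c d by simp
  qed
  have img: "E ` {1..M} \<subseteq> PiE P (\<lambda>_. {0..M})"
  proof
    fix e assume "e \<in> E ` {1..M}"
    then obtain c where c: "c \<in> {1..M}" and e: "e = E c" by auto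
    have "multiplicity p c \<le> M" if "p \<in> P" for p
    proof -
      have p2: "p \<ge> 2" using Pp[OF that] prime_ge_2_nat by blast
      have "multiplicity p c < 2 ^ multiplicity p c" by (rule less_exp)
      also have "\<dots> \<le> p ^ multiplicity p c" using p2 by (simp add: power_mono)
      also have "\<dots> \<le> c" using c by (intro dvd_imp_le) (auto simp: multiplicity_dvd)
      finally show ?thesis using c by simp
    qed
    thus "e \<in> PiE P (\<lambda>_. {0..M})" unfolding e E_def by auto
  qed
  have \<phi>nn: "0 \<le> \<phi> p j" if "p \<in> P" for p j unfolding \<phi>_def by simp
  have "(\<Sum>c\<in>{1..M}. real c powr (-1/real a) / real (my_rad c)) = (\<Sum>c\<in>{1..M}. \<Prod>p\<in>P. \<phi> p (E c p))"
    by (rule sum.cong[OF refl A])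
  also have "\<dots> = (\<Sum>e\<in>E ` {1..M}. \<Prod>p\<in>P. \<phi> p (e p))"
    by (rule sum.reindex[OF inj, symmetric, unfolded comp_def])
  also have "\<dots> \<le> (\<Sum>e\<in>PiE P (\<lambda>_. {0..M}). \<Prod>p\<in>P. \<phi> p (e p))"
    by (rule sum_mono2[OF _ img]) (auto intro!: finite_PiE fP prod_nonneg \<phi>nn)
  also have "\<dots> = (\<Prod>p\<in>P. \<Sum>j\<in>{0..M}. \<phi> p j)"
    by (rule prod_sum_PiE[symmetric]) (auto simp: fP)
  also have "\<dots> \<le> (\<Prod>p\<in>P. exp (real a / (real p * ln (real p))))"
  proof (rule prod_mono)
    fix p assume p: "p \<in> P"
    show "0 \<le> (\<Sum>j\<in>{0..M}. \<phi> p j) \<and> (\<Sum>j\<in>{0..M}. \<phi> p j) \<le> exp (real a / (real p * ln (real p)))"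
      using local_factor[OF Pp[OF p] a, of M] \<phi>nn[OF p] unfolding \<phi>_def by (auto intro: sum_nonneg)
  qed
  also have "\<dots> = exp (real a * (\<Sum>p\<in>P. 1 / (real p * ln (real p))))"
    by (simp add: exp_sum[OF fP] sum_distrib_left)
  also have "\<dots> \<le> exp (real a * (\<Sum>\<^sub>\<infinity>p\<in>{p::nat. prime p}. 1 / (real p * ln (real p))))"
  proof -
    have "(\<Sum>p\<in>P. 1 / (real p * ln (real p))) = (\<Sum>\<^sub>\<infinity>p\<in>P. 1 / (real p * ln (real p)))"
      using fP by simp
    also have "\<dots> \<le> (\<Sum>\<^sub>\<infinity>p\<in>{p::nat. prime p}. 1 / (real p * ln (real p)))"
      by (rule infsum_mono_neutral) (auto simp: fP summable_primes prime_pln_nonneg Pp)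
    finally show ?thesis using a by simp
  qed
  also have "\<dots> = kappa ^ a" unfolding kappa_def by (rule exp_of_nat_mult)
  finally show ?thesis .
qed


lemma main_bound:
  fixes \<alpha> :: nat and Y :: real
  assumes a: "\<alpha> \<ge> 1" and Y: "Y \<ge> 1"
  shows "real (S_full \<alpha> Y) \<le> Y powr (1 / real \<alpha>) * kappa ^ \<alpha>"
proof -
  define N where "N = {n::nat. 1 \<le> n \<and> real n \<le> Y \<and> (\<forall>p. prime p \<and> p dvd n \<longrightarrow> p ^ \<alpha> dvd n)}"
  define M where "M = nat \<lfloor>Y\<rfloor>"
  have leM: "k \<le> M" if "real k \<le> Y" for k :: nat
    unfolding M_def using that by (metis le_nat_floor of_nat_floor floor_of_nat le_floor_iff nat_int)
  define X where "X = (\<lambda>c::nat. (Y / real c) powr (1 / real \<alpha>))"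
  define R where "R = (\<lambda>c. {r::nat. 1 \<le> r \<and> r \<le> M \<and> my_rad c dvd r \<and> real r \<le> X c})"
  define F where "F = (\<lambda>n. (n div my_rad n ^ \<alpha>, my_rad n))"
  have key: "my_rad n ^ \<alpha> dvd n \<and> my_rad (n div my_rad n ^ \<alpha>) dvd my_rad n" if n: "n \<in> N" for n
  proof -
    have n0: "n > 0" using n N_def by auto
    have "my_rad n ^ \<alpha> = (\<Prod>p\<in>prime_factors n. p ^ \<alpha>)" unfolding my_rad_def by (simp add: prod_power_distrib)
    also have "\<dots> dvd (\<Prod>p\<in>prime_factors n. p ^ multiplicity p n)"
    proof (rule prod_dvd_prod)
      fix p assume p: "p \<in> prime_factors n"
      hence "p ^ \<alpha> dvd n" using n unfolding N_def by auto
      moreover have "prime p" using p by auto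
      hence "\<not> is_unit p" using not_prime_unit by blast
      ultimately have "\<alpha> \<le> multiplicity p n" using n0 by (intro multiplicity_geI) auto
      thus "p ^ \<alpha> dvd p ^ multiplicity p n" by (rule le_imp_power_dvd)
    qed
    also have "\<dots> = n" using prime_factorization_nat[OF n0] by simp
    finally have d: "my_rad n ^ \<alpha> dvd n" .
    define c where "c = n div my_rad n ^ \<alpha>"
    have "c dvd n" unfolding c_def using d by (metis dvd_div_mult_self dvd_triv_left)
    have "n = c * my_rad n ^ \<alpha>" unfolding c_def using d by simp
    hence c0: "c \<noteq> 0" using n0 by (metis mult_0 not_less0)
    have "prime_factors c \<subseteq> prime_factors n"
      using \<open>c dvd n\<close> c0 n0 by (auto simp: in_prime_factors_iff intro: dvd_trans)
    hence "my_rad c dvd my_rad n" unfolding my_rad_def by (intro prod_dvd_prod_subset) auto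
    thus ?thesis using d unfolding c_def by simp
  qed
  have inj: "inj_on F N"
  proof (rule inj_onI)
    fix n m assume n: "n \<in> N" and m: "m \<in> N" and e: "F n = F m"
    have "n = my_rad n ^ \<alpha> * (n div my_rad n ^ \<alpha>)" using key[OF n] by simp
    also have "\<dots> = my_rad m ^ \<alpha> * (m div my_rad m ^ \<alpha>)" using e unfolding F_def
      by (metis prod.inject)
    also have "\<dots> = m" using key[OF m] by simp
    finally show "n = m" .
  qed
  have img: "F ` N \<subseteq> Sigma {1..M} R"
  proof
    fix x assume "x \<in> F ` N"
    then obtain n where n: "n \<in> N" and x: "x = F n" by auto
    define c where "c = n div my_rad n ^ \<alpha>"
    define r where "r = my_rad n"
    have n0: "n > 0" and nY: "real n \<le> Y" using n N_def by auto
    have ncr: "n = r ^ \<alpha> * c" unfolding r_def c_def using key[OF n] by simp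
    have c0: "c \<ge> 1" using ncr n0 by (cases c) auto
    have r0: "r \<ge> 1" using ncr n0 a by (cases r) (auto simp: zero_power)
    have "c \<le> n" using ncr r0 by simp
    have "r \<le> r ^ \<alpha>" using r0 a by (simp add: self_le_power)
    also have "\<dots> \<le> n" using ncr c0 by simp
    finally have "r \<le> n" .
    have "real r ^ \<alpha> * real c \<le> Y" using nY ncr by (metis of_nat_mult of_nat_power)
    hence "real r ^ \<alpha> \<le> Y / real c" using c0 by (simp add: field_simps)
    hence "(real r ^ \<alpha>) powr (1 / real \<alpha>) \<le> (Y / real c) powr (1 / real \<alpha>)"
      by (intro powr_mono2) auto
    moreover have "(real r ^ \<alpha>) powr (1 / real \<alpha>) = real r"
      using r0 a by (simp add: powr_realpow[symmetric] powr_powr)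
    ultimately have "real r \<le> X c" unfolding X_def by simp
    moreover have "c \<le> M" "r \<le> M" using \<open>c \<le> n\<close> \<open>r \<le> n\<close> nY leM by (auto intro!: leM)
    moreover have "my_rad c dvd r" using key[OF n] unfolding c_def r_def by simp
    moreover have "x = (c, r)" unfolding x F_def c_def r_def by simp
    ultimately show "x \<in> Sigma {1..M} R" unfolding R_def using c0 r0 by simp
  qed
  have finR: "finite (R c)" for c unfolding R_def by (rule finite_subset[of _ "{..M}"]) auto
  have cardR: "real (card (R c)) \<le> X c / real (my_rad c)" if c: "c \<in> {1..M}" for c
  proof -
    define d where "d = my_rad c"
    have d1: "d \<ge> 1" unfolding d_def my_rad_def
      by (metis One_nat_def Suc_leI in_prime_factors_imp_prime neq0_conv prime_gt_0_nat prod_pos)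
    have X0: "X c \<ge> 0" unfolding X_def by simp
    have "R c \<subseteq> (\<lambda>t. d * t) ` {1..nat \<lfloor>X c / real d\<rfloor>}"
    proof
      fix r assume "r \<in> R c"
      hence r: "1 \<le> r" "d dvd r" "real r \<le> X c" unfolding R_def d_def by auto
      then obtain t where t: "r = d * t" by auto
      have t1: "t \<ge> 1" using r t by (cases t) auto
      have "real d * real t \<le> X c" using r t by simp
      hence "real t \<le> X c / real d" using d1 by (simp add: field_simps)
      hence "t \<le> nat \<lfloor>X c / real d\<rfloor>" by (simp add: le_nat_floor le_floor_iff)
      thus "r \<in> (\<lambda>t. d * t) ` {1..nat \<lfloor>X c / real d\<rfloor>}" using t t1 by auto
    qed
    hence "card (R c) \<le> card ((\<lambda>t. d * t) ` {1..nat \<lfloor>X c / real d\<rfloor>})" by (intro card_mono) auto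
    also have "\<dots> \<le> card {1..nat \<lfloor>X c / real d\<rfloor>}" by (rule card_image_le) simp
    also have "\<dots> = nat \<lfloor>X c / real d\<rfloor>" by simp
    finally have "real (card (R c)) \<le> real (nat \<lfloor>X c / real d\<rfloor>)" by simp
    also have "\<dots> \<le> X c / real d" using X0 d1 by simp
    finally show ?thesis unfolding d_def .
  qed
  have "S_full \<alpha> Y = card N" unfolding S_full_def N_def by simp
  also have "\<dots> = card (F ` N)" using inj by (simp add: card_image)
  also have "\<dots> \<le> card (Sigma {1..M} R)" by (intro card_mono img) (auto intro: finR)
  also have "\<dots> = (\<Sum>c\<in>{1..M}. card (R c))" by (rule card_SigmaI) (auto intro: finR)
  finally have "real (S_full \<alpha> Y) \<le> (\<Sum>c\<in>{1..M}. real (card (R c)))" by (metis of_nat_le_iff of_nat_sum)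
  also have "\<dots> \<le> (\<Sum>c\<in>{1..M}. X c / real (my_rad c))" by (rule sum_mono) (rule cardR)
  also have "\<dots> = (\<Sum>c\<in>{1..M}. Y powr (1 / real \<alpha>) * (real c powr (-1/real \<alpha>) / real (my_rad c)))"
  proof (rule sum.cong[OF refl])
    fix c assume "c \<in> {1..M}"
    hence c0: "real c > 0" by simp
    show "X c / real (my_rad c) = Y powr (1 / real \<alpha>) * (real c powr (-1/real \<alpha>) / real (my_rad c))"
      unfolding X_def using c0 Y by (simp add: powr_divide powr_minus_divide)
  qed
  also have "\<dots> = Y powr (1 / real \<alpha>) * (\<Sum>c\<in>{1..M}. real c powr (-1/real \<alpha>) / real (my_rad c))"
    by (simp add: sum_distrib_left)
  also have "\<dots> \<le> Y powr (1 / real \<alpha>) * kappa ^ \<alpha>"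
    by (intro mult_left_mono euler_bound a) simp
  finally show ?thesis .
qed

theorem lemma5:
  shows "\<exists>C::real. \<forall>(\<alpha>::nat) (Y::real). \<alpha> \<ge> 2 \<longrightarrow> Y \<ge> 2 \<longrightarrow>
     real (S_full \<alpha> Y) \<le> C * real \<alpha> * kappa ^ \<alpha> * Y powr (1 / real \<alpha>) * ln Y"
proof (intro exI allI impI)
  fix \<alpha> :: nat and Y :: real
  assume a: "\<alpha> \<ge> 2" and Y: "Y \<ge> 2"
  define B where "B = kappa ^ \<alpha> * Y powr (1 / real \<alpha>)"
  have B0: "B \<ge> 0" unfolding B_def kappa_def by simp
  have l2: "ln 2 > (0::real)" by simp
  have "ln 2 \<le> ln Y" using Y by simp
  hence "1 \<le> ln Y / ln 2" using l2 by simp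
  also have "\<dots> \<le> real \<alpha> * (ln Y / ln 2)"
  proof -
    have "0 \<le> ln Y / ln 2" using \<open>1 \<le> ln Y / ln 2\<close> by linarith
    moreover have "1 \<le> real \<alpha>" using a by simp
    ultimately have "1 * (ln Y / ln 2) \<le> real \<alpha> * (ln Y / ln 2)" by (rule mult_right_mono[rotated])
    thus ?thesis by simp
  qed
  finally have f: "1 \<le> 1 / ln 2 * real \<alpha> * ln Y" by simp
  have "real (S_full \<alpha> Y) \<le> B" unfolding B_def using main_bound[of \<alpha> Y] a Y by (simp add: mult.commute)
  also have "\<dots> \<le> B * (1 / ln 2 * real \<alpha> * ln Y)" using mult_left_mono[OF f B0] by simp
  also have "\<dots> = 1 / ln 2 * real \<alpha> * kappa ^ \<alpha> * Y powr (1 / real \<alpha>) * ln Y"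
    unfolding B_def by (simp add: algebra_simps)
  finally show "real (S_full \<alpha> Y) \<le> 1 / ln 2 * real \<alpha> * kappa ^ \<alpha> * Y powr (1 / real \<alpha>) * ln Y" .
qed

end
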